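(* Under Assumptions 1–4 below, the iterates of Algorithm 2Direction satisfy, for every $t\ge0$, $$\mathbb E_t\big[\|g^{t+1}-\nabla f(y^{t+1})\|^2\big]\le\frac{2\omega}{n^2}\sum_{i=1}^n\|\nabla f_i(z^t)-h_i^t\|^2+\frac{4\omega L_{\max}}{n}\big(f(z^t)-f(y^{t+1})-\langle\nabla f(y^{t+1}),z^t-y^{t+1}\rangle\big).$$
   Context: Setting: $f=\frac1n\sum_{i=1}^nf_i$, $f_i:\mathbb R^d\to\mathbb R$. Assumption 1: each $f_i$ is $L_i$-smooth, $L_{\max}=\max_iL_i$, and $\widehat L>0$ satisfies $\frac1n\sum_i\|\nabla f_i(x)-\nabla f_i(y)\|^2\le\widehat L^2\|x-y\|^2$ for all $x,y$. Assumption 2: $f$ is $L$-smooth. Assumption 3: each $f_i$ is convex and $f$ is $\mu$-strongly convex ($\mu\ge0$) with minimizer $x^*$. Assumption 4: the randomness of all compressors is drawn independently (of each other, of the coins $c^t$, and of the past). Compressor classes: $\mathbb U(\omega)$ ($\omega\ge0$) = stochastic maps $\mathcal C$ with $\mathbb E\mathcal C(x)=x$, $\mathbb E\|\mathcal C(x)-x\|^2\le\omega\|x\|^2$; $\mathbb B(\alpha)$ ($\alpha\in(0,1]$) = possibly stochastic maps with $\mathbb E\|\mathcal C(x)-x\|^2\le(1-\alpha)\|x\|^2$. Algorithm 2Direction: compressors $\mathcal C_i^{D,y},\mathcal C_i^{D,z}\in\mathbb U(\omega)$ (workers), $\mathcal C^P\in\mathbb B(\alpha)$ (server); parameters $\bar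 L>0$, $\mu\ge0$, $p\in(0,1]$, $\Gamma_0\ge1$, $\tau\in(0,1]$, $x^0,h_1^0,\dots,h_n^0,k^0,v^0\in\mathbb R^d$. Set $\beta=1/(\omega+1)$, $w^0=z^0=u^0=x^0$, $h^0=\frac1n\sum_ih_i^0$, $\theta_{\min}=\frac14\min\{1,\alpha/p,\tau/p,\beta/p\}$. For $t=0,1,\dots$: let $\bar\theta_{t+1}$ be the largest root of $p\bar L\Gamma_t\theta^2+p(\bar L+\Gamma_t\mu)\theta-(\bar L+\Gamma_t\mu)=0$, $\theta_{t+1}=\min\{\bar\theta_{t+1},\theta_{\min}\}$, $\gamma_{t+1}=p\theta_{t+1}\Gamma_t/(1-p\theta_{t+1})$, $\Gamma_{t+1}=\Gamma_t+\gamma_{t+1}$; $y^{t+1}=\theta_{t+1}w^t+(1-\theta_{t+1})z^t$; $m_i^{t,y}=\mathcal C_i^{D,y}(\nabla f_i(y^{t+1})-h_i^t)$; $g^{t+1}=h^t+\frac1n\sum_im_i^{t,y}$; $u^{t+1}=\arg\min_x\{\langle g^{t+1},x\rangle+\frac{\bar L+\Gamma_t\mu}{2\gamma_{t+1}}\|x-u^t\|^2+\frac\mu2\|x-y^{t+1}\|^2\}$; $q^{t+1}=\arg\min_x\{\langle k^t,x\rangle+\frac{\bar L+\Gamma_t\mu}{2\gamma_{t+1}}\|x-w^t\|^2+\frac\mu2\|x-y^{t+1}\|^2\}$; $w^{t+1}=q^{t+1}+\mathcal C^P(u^{t+1}-q^{t+1})$; $x^{t+1}=\theta_{t+1}u^{t+1}+(1-\theta_{t+1})z^t$;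 draw $c^t\sim\mathrm{Bernoulli}(p)$, and set $(k^{t+1},z^{t+1})=(v^t,x^{t+1})$ if $c^t=1$, $(k^{t+1},z^{t+1})=(k^t,z^t)$ if $c^t=0$; $m_i^{t,z}=\mathcal C_i^{D,z}(\nabla f_i(z^{t+1})-h_i^t)$; $h_i^{t+1}=h_i^t+\beta m_i^{t,z}$; $v^{t+1}=(1-\tau)v^t+\tau(h^t+\frac1n\sum_im_i^{t,z})$; $h^{t+1}=h^t+\frac\beta n\sum_im_i^{t,z}$. $\mathbb E_t$ denotes conditional expectation given the randomness of the first $t$ iterations. *)

theory Defs
  imports "HOL-Analysis.Analysis" "HOL-Probability.Probability"
begin

text \<open>An unbiased compressor of class U(omega), modelled as a random map:
  C x s is the compressed value of x at sample point s of the probability space M.\<close>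
definition unbiased_compressor ::
  "'a measure \<Rightarrow> real \<Rightarrow> ('v::euclidean_space \<Rightarrow> 'a \<Rightarrow> 'v) \<Rightarrow> bool" where
  "unbiased_compressor M \<omega> C \<longleftrightarrow>
     (\<forall>x. C x \<in> borel_measurable M \<and> integrable M (C x) \<and>
          (\<integral>s. C x s \<partial>M) = x \<and>
          integrable M (\<lambda>s. (norm (C x s - x))\<^sup>2) \<and>
          (\<integral>s. (norm (C x s - x))\<^sup>2 \<partial>M) \<le> \<omega> * (norm x)\<^sup>2)"

definition favg :: "nat \<Rightarrow> (nat \<Rightarrow> 'v \<Rightarrow> real) \<Rightarrow> 'v \<Rightarrow> real" where
  "favg n f x = (1 / real n) * (\<Sum>i<n. f i x)"

definition gavg :: "nat \<Rightarrow> (nat \<Rightarrow> 'v \<Rightarrow> 'v::real_vector) \<Rightarrow> 'v \<Rightarrow> 'v" where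
  "gavg n g x = (1 / real n) *\<^sub>R (\<Sum>i<n. g i x)"

end

theory Submission
  imports Defs
begin

lemma line_deriv:
  fixes f :: "'v::euclidean_space \<Rightarrow> real"
  assumes "\<And>x. (f has_derivative (\<lambda>d. g x \<bullet> d)) (at x)"
  shows "((\<lambda>t. f (x + t *\<^sub>R d)) has_real_derivative (g (x + t *\<^sub>R d) \<bullet> d)) (at t)"
proof -
  have l: "((\<lambda>t::real. x + t *\<^sub>R d) has_derivative (\<lambda>t. t *\<^sub>R d)) (at t)"
    by (auto intro!: derivative_eq_intros)
  have "((\<lambda>t. f (x + t *\<^sub>R d)) has_derivative (\<lambda>s. g (x + t *\<^sub>R d) \<bullet> (s *\<^sub>R d))) (at t)"
    using has_derivative_compose[OF l assms] by (simp add: o_def)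
  moreover have "(\<lambda>s. g (x + t *\<^sub>R d) \<bullet> (s *\<^sub>R d)) = (\<lambda>s. s * (g (x + t *\<^sub>R d) \<bullet> d))"
    by auto
  ultimately show ?thesis
    by (simp add: has_field_derivative_def mult.commute[of _ "g (x + t *\<^sub>R d) \<bullet> d"])
qed

lemma grad_ineq:
  fixes f :: "'v::euclidean_space \<Rightarrow> real"
  assumes cv: "convex_on UNIV f" and gr: "\<And>x. (f has_derivative (\<lambda>d. g x \<bullet> d)) (at x)"
  shows "f w \<ge> f x + g x \<bullet> (w - x)"
proof -
  define d where "d = w - x"
  define h where "h t = f (x + t *\<^sub>R d)" for t :: real
  have hconv: "convex_on UNIV h"
  proof (rule convex_onI)
    fix t a b :: real assume "t > 0" "t < 1"
    have "x + ((1 - t) *\<^sub>R a + t *\<^sub>R b) *\<^sub>R d = (1 - t) *\<^sub>R (x + a *\<^sub>R d) + t *\<^sub>R (x + b *\<^sub>R d)"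
      by (simp add: algebra_simps)
    then show "h ((1 - t) *\<^sub>R a + t *\<^sub>R b) \<le> (1 - t) * h a + t * h b"
      unfolding h_def using convex_onD[OF cv, of t] \<open>t > 0\<close> \<open>t < 1\<close> by auto
  qed simp
  have hd: "(h has_field_derivative (g x \<bullet> d)) (at 0 within UNIV)"
    using line_deriv[OF gr, of x d 0] unfolding h_def by simp
  have "h 1 - h 0 \<ge> (g x \<bullet> d) * (1 - 0)"
    by (rule convex_on_imp_above_tangent[OF hconv _ _ _ hd]) auto
  then show ?thesis unfolding h_def d_def by simp
qed

lemma descent:
  fixes f :: "'v::euclidean_space \<Rightarrow> real"
  assumes gr: "\<And>x. (f has_derivative (\<lambda>d. g x \<bullet> d)) (at x)"
    and lip: "\<And>x x'. norm (g x - g x') \<le> L * norm (x - x')"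
  shows "f w \<le> f x + g x \<bullet> (w - x) + L / 2 * (norm (w - x))\<^sup>2"
proof -
  define d where "d = w - x"
  define h where "h t = f (x + t *\<^sub>R d) - t * (g x \<bullet> d) - L / 2 * t\<^sup>2 * (norm d)\<^sup>2" for t :: real
  have hd: "(h has_real_derivative (g (x + t *\<^sub>R d) \<bullet> d - g x \<bullet> d - L * t * (norm d)\<^sup>2)) (at t)" for t
    unfolding h_def
    by (rule derivative_eq_intros line_deriv[OF gr] | simp)+
  have le: "g (x + t *\<^sub>R d) \<bullet> d - g x \<bullet> d - L * t * (norm d)\<^sup>2 \<le> 0" if "t \<ge> 0" for t
  proof -
    have "g (x + t *\<^sub>R d) \<bullet> d - g x \<bullet> d = (g (x + t *\<^sub>R d) - g x) \<bullet> d" by (simp add: inner_diff_left)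
    also have "\<dots> \<le> norm (g (x + t *\<^sub>R d) - g x) * norm d" by (rule norm_cauchy_schwarz)
    also have "\<dots> \<le> (L * norm (t *\<^sub>R d)) * norm d"
      using lip[of "x + t *\<^sub>R d" x] by (intro mult_right_mono) auto
    also have "\<dots> = L * t * (norm d)\<^sup>2" using that by (simp add: power2_eq_square)
    finally show ?thesis by simp
  qed
  have "h 1 \<le> h 0"
  proof (rule DERIV_nonpos_imp_nonincreasing[of 0 1 h])
    fix t :: real assume "0 \<le> t" "t \<le> 1"
    then show "\<exists>y. DERIV h t :> y \<and> y \<le> 0" using hd[of t] le[of t] by blast
  qed simp
  then show ?thesis unfolding h_def d_def by simp
qed

lemma cocoerc:
  fixes f :: "'v::euclidean_space \<Rightarrow> real"
  assumes cv: "convex_on UNIV f" and gr: "\<And>x. (f has_derivative (\<lambda>d. g x \<bullet> d)) (at x)"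
    and lip: "\<And>x x'. norm (g x - g x') \<le> L * norm (x - x')" and L0: "L \<ge> 0"
  shows "(norm (g z - g y))\<^sup>2 \<le> 2 * L * (f z - f y - g y \<bullet> (z - y))"
proof (cases "L = 0")
  case True
  then have "g z = g y" using lip[of z y] by simp
  then show ?thesis using True by simp
next
  case False
  then have Lp: "L > 0" using L0 by simp
  define D where "D = g z - g y"
  define w where "w = z - (1 / L) *\<^sub>R D"
  have A: "f w \<ge> f y + g y \<bullet> (w - y)" by (rule grad_ineq[OF cv gr])
  have B: "f w \<le> f z + g z \<bullet> (w - z) + L / 2 * (norm (w - z))\<^sup>2" by (rule descent[OF gr lip])
  have e1: "g y \<bullet> (w - y) = g y \<bullet> (z - y) + g y \<bullet> (w - z)" by (simp add: inner_diff_right)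
  have e2: "g z \<bullet> (w - z) - g y \<bullet> (w - z) = - (1 / L) * (norm D)\<^sup>2"
  proof -
    have "w - z = - (1 / L) *\<^sub>R D" unfolding w_def by simp
    then have "g z \<bullet> (w - z) - g y \<bullet> (w - z) = D \<bullet> (- (1 / L) *\<^sub>R D)"
      unfolding D_def by (simp only: inner_diff_left[symmetric])
    also have "\<dots> = - (1 / L) * (norm D)\<^sup>2" by (simp add: power2_norm_eq_inner)
    finally show ?thesis .
  qed
  have e3: "L / 2 * (norm (w - z))\<^sup>2 = (1 / (2 * L)) * (norm D)\<^sup>2"
    unfolding w_def using Lp by (simp add: power2_eq_square field_simps)
  have "f y + g y \<bullet> (z - y) \<le> f z - (1 / (2 * L)) * (norm D)\<^sup>2"
  proof -
    have "f y + g y \<bullet> (z - y) \<le> f z + (g z \<bullet> (w - z) - g y \<bullet> (w - z)) + L / 2 * (norm (w - z))\<^sup>2"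
      using A B e1 by linarith
    also have "\<dots> = f z + (- (1 / L) * (norm D)\<^sup>2 + (1 / (2 * L)) * (norm D)\<^sup>2)" using e2 e3 by simp
    also have "- (1 / L) * (norm D)\<^sup>2 + (1 / (2 * L)) * (norm D)\<^sup>2 = - (1 / (2 * L)) * (norm D)\<^sup>2"
      using Lp by (simp add: field_simps)
    finally show ?thesis by simp
  qed
  then have "(1 / (2 * L)) * (norm D)\<^sup>2 \<le> f z - f y - g y \<bullet> (z - y)" by simp
  then show ?thesis unfolding D_def[symmetric] using Lp by (simp add: field_simps)
qed

lemma inner_abs_bound:
  fixes a b :: "'v::euclidean_space"
  shows "norm (a \<bullet> b) \<le> norm ((norm a)\<^sup>2 + (norm b)\<^sup>2)"
proof -
  have "\<bar>a \<bullet> b\<bar> \<le> norm a * norm b" by (rule Cauchy_Schwarz_ineq2)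
  also have "\<dots> \<le> (norm a)\<^sup>2 + (norm b)\<^sup>2"
  proof -
    have "0 \<le> (norm a - norm b)\<^sup>2" by simp
    then have "2 * (norm a * norm b) \<le> (norm a)\<^sup>2 + (norm b)\<^sup>2" by (simp add: power2_eq_square algebra_simps)
    moreover have "0 \<le> norm a * norm b" by simp
    ultimately show ?thesis by linarith
  qed
  finally show ?thesis by simp
qed

lemma (in prob_space) cross_zero:
  fixes X :: "nat \<Rightarrow> 'a \<Rightarrow> 'v::euclidean_space"
  assumes int: "\<And>i. i < n \<Longrightarrow> integrable M (X i)"
   and mean: "\<And>i. i < n \<Longrightarrow> (\<integral>s. X i s \<partial>M) = 0"
   and ind: "\<And>b. indep_vars (\<lambda>_. borel) (\<lambda>i s. X i s \<bullet> b) {..<n}"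
   and ij: "i < n" "j < n" "i \<noteq> j"
  shows "(\<integral>s. X i s \<bullet> X j s \<partial>M) = 0"
proof -
  have pb: "integrable M (\<lambda>s. (X i s \<bullet> b) * (X j s \<bullet> b))"
       and eb: "(\<integral>s. (X i s \<bullet> b) * (X j s \<bullet> b) \<partial>M) = 0" for b
  proof -
    have sub: "{i, j} \<subseteq> {..<n}" using ij by simp
    have indij: "indep_vars (\<lambda>_. borel) (\<lambda>k s. X k s \<bullet> b) {i, j}"
      by (rule indep_vars_subset[OF ind sub])
    have ik: "integrable M (\<lambda>s. X k s \<bullet> b)" if "k \<in> {i, j}" for k
    proof -
      have "k < n" using that sub by blast
      then show ?thesis by (intro integrable_inner_left int)
    qed
    have pr: "(\<lambda>s. \<Prod>k\<in>{i, j}. X k s \<bullet> b) = (\<lambda>s. (X i s \<bullet> b) * (X j s \<bullet> b))"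
      using ij by auto
    show "integrable M (\<lambda>s. (X i s \<bullet> b) * (X j s \<bullet> b))"
      using indep_vars_integrable[OF _ indij ik] pr by simp
    have "(\<integral>s. (\<Prod>k\<in>{i, j}. X k s \<bullet> b) \<partial>M) = (\<Prod>k\<in>{i, j}. \<integral>s. X k s \<bullet> b \<partial>M)"
      by (rule indep_vars_lebesgue_integral[OF _ indij ik]) simp
    also have "\<dots> = (\<integral>s. X i s \<bullet> b \<partial>M) * (\<integral>s. X j s \<bullet> b \<partial>M)"
      using ij(3) by simp
    also have "\<dots> = 0" using integral_inner_left[of b M "X i"] int[OF ij(1)] mean[OF ij(1)] by simp
    finally show "(\<integral>s. (X i s \<bullet> b) * (X j s \<bullet> b) \<partial>M) = 0" using pr by simp
  qed
  have "(\<integral>s. X i s \<bullet> X j s \<partial>M) = (\<integral>s. (\<Sum>b\<in>Basis. (X i s \<bullet> b) * (X j s \<bullet> b)) \<partial>M)"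
    by (rule Bochner_Integration.integral_cong[OF refl], rule euclidean_inner)
  also have "\<dots> = (\<Sum>b\<in>Basis. \<integral>s. (X i s \<bullet> b) * (X j s \<bullet> b) \<partial>M)"
    by (rule Bochner_Integration.integral_sum) (use pb in auto)
  also have "\<dots> = 0" using eb by simp
  finally show ?thesis .
qed

lemma (in prob_space) var_sum:
  fixes X :: "nat \<Rightarrow> 'a \<Rightarrow> 'v::euclidean_space"
  assumes meas: "\<And>i. i < n \<Longrightarrow> X i \<in> borel_measurable M"
   and int: "\<And>i. i < n \<Longrightarrow> integrable M (X i)"
   and mean: "\<And>i. i < n \<Longrightarrow> (\<integral>s. X i s \<partial>M) = 0"
   and sq: "\<And>i. i < n \<Longrightarrow> integrable M (\<lambda>s. (norm (X i s))\<^sup>2)"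
   and ind: "\<And>b. indep_vars (\<lambda>_. borel) (\<lambda>i s. X i s \<bullet> b) {..<n}"
  shows "(\<integral>s. (norm (\<Sum>i<n. X i s))\<^sup>2 \<partial>M) = (\<Sum>i<n. \<integral>s. (norm (X i s))\<^sup>2 \<partial>M)"
proof -
  have pint: "integrable M (\<lambda>s. X i s \<bullet> X j s)" if "i < n" "j < n" for i j
  proof (rule Bochner_Integration.integrable_bound[OF Bochner_Integration.integrable_add[OF sq[OF that(1)] sq[OF that(2)]]])
    show "(\<lambda>s. X i s \<bullet> X j s) \<in> borel_measurable M"
      using meas that by (intro borel_measurable_inner) auto
    show "AE s in M. norm (X i s \<bullet> X j s) \<le> norm ((norm (X i s))\<^sup>2 + (norm (X j s))\<^sup>2)"
      by (intro AE_I2 inner_abs_bound)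
  qed
  have "(\<integral>s. (norm (\<Sum>i<n. X i s))\<^sup>2 \<partial>M) = (\<integral>s. (\<Sum>i<n. \<Sum>j<n. X i s \<bullet> X j s) \<partial>M)"
  proof (rule Bochner_Integration.integral_cong[OF refl])
    fix s
    have "(norm (\<Sum>i<n. X i s))\<^sup>2 = (\<Sum>i<n. X i s \<bullet> (\<Sum>j<n. X j s))"
      by (simp only: power2_norm_eq_inner inner_sum_left)
    also have "\<dots> = (\<Sum>i<n. \<Sum>j<n. X i s \<bullet> X j s)" by (simp only: inner_sum_right)
    finally show "(norm (\<Sum>i<n. X i s))\<^sup>2 = (\<Sum>i<n. \<Sum>j<n. X i s \<bullet> X j s)" .
  qed
  also have "\<dots> = (\<Sum>i<n. \<integral>s. (\<Sum>j<n. X i s \<bullet> X j s) \<partial>M)"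
    by (rule Bochner_Integration.integral_sum) (use pint in auto)
  also have "\<dots> = (\<Sum>i<n. \<Sum>j<n. \<integral>s. X i s \<bullet> X j s \<partial>M)"
    by (rule sum.cong[OF refl], rule Bochner_Integration.integral_sum) (use pint in auto)
  also have "\<dots> = (\<Sum>i<n. \<integral>s. (norm (X i s))\<^sup>2 \<partial>M)"
  proof (rule sum.cong[OF refl])
    fix i assume i: "i \<in> {..<n}"
    have "(\<Sum>j<n. \<integral>s. X i s \<bullet> X j s \<partial>M) = (\<integral>s. X i s \<bullet> X i s \<partial>M) + (\<Sum>j\<in>{..<n} - {i}. \<integral>s. X i s \<bullet> X j s \<partial>M)"
      using i by (simp add: sum.remove)
    also have "(\<Sum>j\<in>{..<n} - {i}. \<integral>s. X i s \<bullet> X j s \<partial>M) = 0"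
      using i by (intro sum.neutral ballI cross_zero[OF int mean ind]) auto
    finally show "(\<Sum>j<n. \<integral>s. X i s \<bullet> X j s \<partial>M) = (\<integral>s. (norm (X i s))\<^sup>2 \<partial>M)"
      by (simp add: power2_norm_eq_inner)
  qed
  finally show ?thesis .
qed

theorem lemma5:
  fixes M :: "'a measure"
    and n :: nat
    and f :: "nat \<Rightarrow> 'v::euclidean_space \<Rightarrow> real"
    and gradf :: "nat \<Rightarrow> 'v \<Rightarrow> 'v"
    and L :: "nat \<Rightarrow> real" and Lhat Lf \<mu> \<omega> :: real
    and xstar :: 'v
    and C :: "nat \<Rightarrow> 'v \<Rightarrow> 'a \<Rightarrow> 'v"
    and y z :: 'v and hs :: "nat \<Rightarrow> 'v"
  assumes n_pos: "n \<ge> 1"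
    (* gradients *)
    and grad: "\<And>i x. i < n \<Longrightarrow> (f i has_derivative (\<lambda>d. gradf i x \<bullet> d)) (at x)"
    (* Assumption 1 *)
    and smooth_i: "\<And>i x x'. i < n \<Longrightarrow> norm (gradf i x - gradf i x') \<le> L i * norm (x - x')"
    and Lhat_pos: "Lhat > 0"
    and Lhat: "\<And>x x'. (1 / real n) * (\<Sum>i<n. (norm (gradf i x - gradf i x'))\<^sup>2)
                        \<le> Lhat\<^sup>2 * (norm (x - x'))\<^sup>2"
    (* Assumption 2 *)
    and smooth_f: "\<And>x x'. norm (gavg n gradf x - gavg n gradf x') \<le> Lf * norm (x - x')"
    (* Assumption 3 *)
    and convex_i: "\<And>i. i < n \<Longrightarrow> convex_on UNIV (f i)"
    and mu_nonneg: "\<mu> \<ge> 0"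
    and strongly_convex: "\<And>x x'. favg n f x' \<ge> favg n f x + gavg n gradf x \<bullet> (x' - x)
                                   + \<mu> / 2 * (norm (x' - x))\<^sup>2"
    and minimizer: "\<And>x. favg n f xstar \<le> favg n f x"
    (* compressors C_i^{D,y} in U(omega) on the probability space of step t *)
    and prob: "prob_space M"
    and omega_nonneg: "\<omega> \<ge> 0"
    and compr: "\<And>i. i < n \<Longrightarrow> unbiased_compressor M \<omega> (C i)"
    (* Assumption 4: independence of compressor randomness *)
    and indep: "\<And>xs. prob_space.indep_vars M (\<lambda>_. borel) (\<lambda>i. C i (xs i)) {..<n}"
  shows "(\<integral>s. (norm ((gavg n (\<lambda>i _. hs i) y
                         + (1 / real n) *\<^sub>R (\<Sum>i<n. C i (gradf i y - hs i) s))
                        - gavg n gradf y))\<^sup>2 \<partial>M)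
         \<le> 2 * \<omega> / (real n)\<^sup>2 * (\<Sum>i<n. (norm (gradf i z - hs i))\<^sup>2)
           + 4 * \<omega> * Max (L ` {..<n}) / real n
             * (favg n f z - favg n f y - gavg n gradf y \<bullet> (z - y))"
proof -
  interpret P: prob_space M by (rule prob)
  define a where "a i = gradf i y - hs i" for i
  define X where "X i s = C i (a i) s - a i" for i s
  have cmp: "C i x \<in> borel_measurable M" "integrable M (C i x)" "(\<integral>s. C i x s \<partial>M) = x"
      "integrable M (\<lambda>s. (norm (C i x s - x))\<^sup>2)" "(\<integral>s. (norm (C i x s - x))\<^sup>2 \<partial>M) \<le> \<omega> * (norm x)\<^sup>2"
    if "i < n" for i x
    using compr[OF that] unfolding unbiased_compressor_def by auto
  have rw: "gavg n (\<lambda>i _. hs i) y + (1 / real n) *\<^sub>R (\<Sum>i<n. C i (gradf i y - hs i) s) - gavg n gradf y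
      = (1 / real n) *\<^sub>R (\<Sum>i<n. X i s)" for s
  proof -
    have "(\<Sum>i<n. X i s) = (\<Sum>i<n. (C i (gradf i y - hs i) s - gradf i y) + hs i)"
      unfolding X_def a_def by (intro sum.cong) (auto simp: algebra_simps)
    also have "\<dots> = (\<Sum>i<n. C i (gradf i y - hs i) s) - (\<Sum>i<n. gradf i y) + (\<Sum>i<n. hs i)"
      by (simp only: sum.distrib sum_subtractf)
    finally have eq: "(\<Sum>i<n. X i s) = (\<Sum>i<n. C i (gradf i y - hs i) s) - (\<Sum>i<n. gradf i y) + (\<Sum>i<n. hs i)" .
    show ?thesis unfolding gavg_def eq scaleR_add_right scaleR_diff_right by (simp add: algebra_simps)
  qed
  have meas: "X i \<in> borel_measurable M" if "i < n" for i
    unfolding X_def using cmp(1)[OF that] by measurable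
  have int: "integrable M (X i)" if "i < n" for i
    unfolding X_def using cmp(2)[OF that] by (intro Bochner_Integration.integrable_diff) auto
  have mean: "(\<integral>s. X i s \<partial>M) = 0" if "i < n" for i
    unfolding X_def using cmp(2,3)[OF that]
    by (subst Bochner_Integration.integral_diff) (auto simp: P.prob_space)
  have sq: "integrable M (\<lambda>s. (norm (X i s))\<^sup>2)" if "i < n" for i
    unfolding X_def using cmp(4)[OF that] .
  have ind: "P.indep_vars (\<lambda>_. borel) (\<lambda>i s. X i s \<bullet> b) {..<n}" for b
  proof -
    have "P.indep_vars (\<lambda>_. borel) (\<lambda>i s. (\<lambda>v. (v - a i) \<bullet> b) (C i (a i) s)) {..<n}"
      by (rule P.indep_vars_compose2[OF indep[of a]]) measurable
    then show ?thesis unfolding X_def by simp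
  qed
  have E: "(\<integral>s. (norm (\<Sum>i<n. X i s))\<^sup>2 \<partial>M) = (\<Sum>i<n. \<integral>s. (norm (X i s))\<^sup>2 \<partial>M)"
    by (rule P.var_sum[OF meas int mean sq ind])
  have E2: "(\<Sum>i<n. \<integral>s. (norm (X i s))\<^sup>2 \<partial>M) \<le> \<omega> * (\<Sum>i<n. (norm (a i))\<^sup>2)"
    unfolding sum_distrib_left X_def by (intro sum_mono cmp(5)) auto
  define Lm where "Lm = Max (L ` {..<n})"
  define D where "D i = f i z - f i y - gradf i y \<bullet> (z - y)" for i
  have Li: "a i \<bullet> a i \<le> 2 * (norm (gradf i z - hs i))\<^sup>2 + 4 * Lm * D i" if i: "i < n" for i
  proof -
    obtain e :: 'v where e: "e \<in> Basis" using nonempty_Basis by blast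
    have L0: "L i \<ge> 0" using smooth_i[OF i, of e 0] e
      by (smt (verit, ccfv_SIG) norm_Basis norm_ge_zero diff_zero mult_cancel_left2)
    have LL: "L i \<le> Lm" unfolding Lm_def using i by (intro Max_ge) auto
    have D0: "D i \<ge> 0" unfolding D_def using grad_ineq[OF convex_i[OF i] grad[OF i], where w=z and x=y] by simp
    have co: "(norm (gradf i z - gradf i y))\<^sup>2 \<le> 2 * L i * D i"
      unfolding D_def by (rule cocoerc[OF convex_i[OF i] grad[OF i] smooth_i[OF i] L0])
    have "a i = (gradf i z - hs i) + (gradf i y - gradf i z)" unfolding a_def by simp
    then have "norm (a i) \<le> norm (gradf i z - hs i) + norm (gradf i y - gradf i z)"
      by (metis norm_triangle_ineq)
    then have "(norm (a i))\<^sup>2 \<le> (norm (gradf i z - hs i) + norm (gradf i y - gradf i z))\<^sup>2"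
      by (simp add: power_mono)
    also have "\<dots> \<le> 2 * (norm (gradf i z - hs i))\<^sup>2 + 2 * (norm (gradf i y - gradf i z))\<^sup>2"
    proof -
      have "0 \<le> (norm (gradf i z - hs i) - norm (gradf i y - gradf i z))\<^sup>2" by simp
      then show ?thesis by (simp add: power2_eq_square algebra_simps)
    qed
    also have "(norm (gradf i y - gradf i z)) = norm (gradf i z - gradf i y)" by (rule norm_minus_commute)
    finally have "(norm (a i))\<^sup>2 \<le> 2 * (norm (gradf i z - hs i))\<^sup>2 + 4 * L i * D i" using co by simp
    moreover have "L i * D i \<le> Lm * D i" using LL D0 by (rule mult_right_mono)
    ultimately show ?thesis by (simp add: power2_norm_eq_inner)
  qed
  have sumD: "(\<Sum>i<n. D i) = real n * (favg n f z - favg n f y - gavg n gradf y \<bullet> (z - y))"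
    using n_pos by (simp add: D_def favg_def gavg_def sum_subtractf inner_sum_left right_diff_distrib)
  have S: "(\<Sum>i<n. (norm (a i))\<^sup>2) \<le> 2 * (\<Sum>i<n. (norm (gradf i z - hs i))\<^sup>2) + 4 * Lm * (\<Sum>i<n. D i)"
  proof -
    have "(\<Sum>i<n. (norm (a i))\<^sup>2) \<le> (\<Sum>i<n. 2 * (norm (gradf i z - hs i))\<^sup>2 + 4 * Lm * D i)"
      by (intro sum_mono) (use Li in \<open>auto simp: power2_norm_eq_inner\<close>)
    also have "\<dots> = 2 * (\<Sum>i<n. (norm (gradf i z - hs i))\<^sup>2) + 4 * Lm * (\<Sum>i<n. D i)"
      by (simp add: sum.distrib sum_distrib_left)
    finally show ?thesis .
  qed
  have "(\<integral>s. (norm (gavg n (\<lambda>i _. hs i) y + (1 / real n) *\<^sub>R (\<Sum>i<n. C i (gradf i y - hs i) s)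
                        - gavg n gradf y))\<^sup>2 \<partial>M)
      = (\<integral>s. (1 / real n)\<^sup>2 * (norm (\<Sum>i<n. X i s))\<^sup>2 \<partial>M)"
    unfolding rw by (rule Bochner_Integration.integral_cong[OF refl]) (simp only: norm_scaleR power_mult_distrib power2_abs)
  also have "\<dots> = (1 / real n)\<^sup>2 * (\<Sum>i<n. \<integral>s. (norm (X i s))\<^sup>2 \<partial>M)"
    by (simp add: E)
  also have "\<dots> \<le> (1 / real n)\<^sup>2 * (\<omega> * (2 * (\<Sum>i<n. (norm (gradf i z - hs i))\<^sup>2) + 4 * Lm * (\<Sum>i<n. D i)))"
    using E2 S omega_nonneg by (intro mult_left_mono) (auto intro: order_trans mult_left_mono)
  also have "\<dots> = 2 * \<omega> / (real n)\<^sup>2 * (\<Sum>i<n. (norm (gradf i z - hs i))\<^sup>2)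
           + 4 * \<omega> * Lm / real n * (favg n f z - favg n f y - gavg n gradf y \<bullet> (z - y))"
    unfolding sumD using n_pos by (simp add: field_simps power2_eq_square)
  finally show ?thesis unfolding Lm_def .
qed

end
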